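(* For every integer $n\ge 2$, none of the Fibonacci numbers $F_1,F_2,\ldots,F_n$ is an eigenvalue of the Fibonacci--Redheffer matrix $F_R(n)$; that is, $F_j\notin\sigma(F_R(n))$ for $j=1,2,\ldots,n$.
   Context: The Fibonacci numbers are $F_1=F_2=1$, $F_n=F_{n-1}+F_{n-2}$ for $n\ge 3$. The Fibonacci--Redheffer matrix $F_R(n)=[F_R(i,j)]_{i,j=1}^n$ is defined by $F_R(i,j)=1$ if $j=1$; $F_R(i,j)=F_i$ if $i\mid j$; and $F_R(i,j)=0$ otherwise. $\sigma(A)$ denotes the set of eigenvalues of a square matrix $A$. *)

theory Defs
  imports "Jordan_Normal_Form.Char_Poly" "HOL-Number_Theory.Fib"
begin

text \<open>Fibonacci--Redheffer matrix F_R(n), 1-based entries (i,j) stored at 0-based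
  index (i-1,j-1).
  Viewed as a complex matrix so that its spectrum is taken over the complex numbers.\<close>
definition fib_redheffer :: "nat \<Rightarrow> complex mat" where
  "fib_redheffer n = mat n n (\<lambda>(i, j).
     if j + 1 = 1 then 1
     else if (i + 1) dvd (j + 1) then of_nat (fib (i + 1))
     else 0)"

end

theory Submission
  imports Defs
begin


lemma fib_strict: "2 \<le> a \<Longrightarrow> a < b \<Longrightarrow> fib a < fib b"
proof (induction b)
  case 0 then show ?case by simp
next
  case (Suc b)
  have "fib b < fib (Suc b)"
  proof -
    have "b \<ge> 2" using Suc.prems by simp
    then obtain c where c: "b = Suc (Suc c)" by (metis add_2_eq_Suc le_Suc_ex)
    have "fib (Suc b) = fib (Suc (Suc c)) + fib (Suc c)" using c by simp
    moreover have "fib (Suc c) > 0" by (simp add: fib_neq_0_nat)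
    ultimately show ?thesis using c by simp
  qed
  then show ?case using Suc by (cases "a = b") auto
qed

lemma fib_pos: "n > 0 \<Longrightarrow> fib n > 0" by (rule fib_neq_0_nat)

lemma fib_ge_52: "n \<ge> 2 \<Longrightarrow> 5 * fib n \<le> 2 * fib (n + 2)"
proof -
  assume "n \<ge> 2"
  then obtain c where c: "n = Suc (Suc c)" by (metis add_2_eq_Suc le_Suc_ex)
  have "fib (n+2) = fib (n+1) + fib n" by (rule fib_plus_2)
  moreover have "fib (n+1) = fib n + fib (Suc c)" using c by simp
  moreover have "fib n = fib (Suc c) + fib c" using c by simp
  moreover have "fib c \<le> fib (Suc c)" by (rule fib_Suc_mono)
  ultimately show ?thesis by linarith
qed

lemma fib_le_3: assumes "n \<ge> 1" shows "fib (n + 2) \<le> 3 * fib n"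
proof -
  have "fib (n+2) = fib (n+1) + fib n" by (rule fib_plus_2)
  moreover have "fib (n+1) \<le> 2 * fib n"
  proof (cases n)
    case 0 then show ?thesis using \<open>n \<ge> 1\<close> by simp
  next
    case (Suc c) then show ?thesis using fib_Suc_mono[of c] by simp
  qed
  ultimately show ?thesis by linarith
qed

lemma fib_add_ge: "fib (a + b) \<ge> fib a * fib (Suc b)"
proof (cases a)
  case 0 then show ?thesis by simp
next
  case (Suc c)
  have "fib (Suc (c + b)) = fib (Suc b) * fib (Suc c) + fib b * fib c" by (rule fib_add)
  then show ?thesis using Suc by (simp add: mult.commute)
qed

lemma fib_mult_ge3: assumes j: "j \<ge> 3" and m: "m \<ge> 1" shows "fib (m * j) \<ge> fib j * 3 ^ (m - 1)"
  using m
proof (induction m rule: dec_induct)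
  case base then show ?case by simp
next
  case (step m)
  have "fib (Suc m * j) = fib (m * j + j)" by (simp add: add.commute)
  also have "\<dots> \<ge> fib (m*j) * fib (Suc j)" by (rule fib_add_ge)
  finally have 1: "fib (Suc m * j) \<ge> fib (m*j) * fib (Suc j)" .
  have "fib (Suc j) \<ge> fib 4" using j by (intro fib_mono) simp
  then have "fib (Suc j) \<ge> 3" by (simp add: numeral_eq_Suc)
  have "fib j * 3 ^ (Suc m - 1) = (fib j * 3 ^ (m - 1)) * 3" using step.hyps
    by (cases m) auto
  also have "\<dots> \<le> fib (m*j) * fib (Suc j)" using step.IH j \<open>fib (Suc j) \<ge> 3\<close>
    by (intro mult_mono) auto
  finally show ?case using 1 by linarith
qed

lemma fib_le_pow3: "m \<ge> 1 \<Longrightarrow> fib (2*m) \<le> 3 ^ (m - 1)"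
proof (induction m rule: dec_induct)
  case base then show ?case by simp
next
  case (step m)
  have "fib (2 * Suc m) = fib (2*m + 2)" by simp
  also have "\<dots> \<le> 3 * fib (2*m)" using step.hyps by (intro fib_le_3) simp
  also have "\<dots> \<le> 3 * 3^(m-1)" using step.IH by simp
  also have "\<dots> = 3 ^ (Suc m - 1)" using step.hyps by (cases m) auto
  finally show ?case .
qed

lemma fib_mult_ge: assumes j: "j \<ge> 2" and m: "m \<ge> 1" shows "fib j * fib (2*m) \<le> fib (m * j)"
proof (cases "j = 2")
  case True then show ?thesis by (simp add: mult.commute)
next
  case False
  then have j3: "j \<ge> 3" using j by simp
  have "fib j * fib (2*m) \<le> fib j * 3 ^ (m - 1)" using fib_le_pow3[OF m] by simp
  also have "\<dots> \<le> fib (m * j)" by (rule fib_mult_ge3[OF j3 m])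
  finally show ?thesis .
qed

lemma fib_vals: "fib 4 = 3" "fib 6 = 8" "fib 8 = 21" "fib 10 = 55" "fib 12 = 144" "fib 14 = 377"
  by (simp_all add: numeral_eq_Suc)

definition V :: "nat \<Rightarrow> real" where
  "V m = (if m = 0 then 0 else if m = 1 then 1 else if m = 2 then 3/2 else if m = 3 then 8/7
     else if m = 4 then 21/8 else if m = 5 then 55/54 else if m = 6 then 144/143 * (1 + 3/2 + 8/7)
     else (real m)^2 / 2)"

lemma V_nonneg: "V m \<ge> 0" by (simp add: V_def)

lemma V_le_sq: "m \<ge> 2 \<Longrightarrow> V m \<le> (real m)^2 / 2"
  by (auto simp: V_def power2_eq_square)

lemma inv_sq_sum: "m \<ge> 2 \<Longrightarrow> (\<Sum>e\<in>{2..m}. 1 / (real e)^2) \<le> 3/4 - 1 / real m"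
proof (induction m rule: dec_induct)
  case base then show ?case by simp
next
  case (step m)
  have "(\<Sum>e\<in>{2..Suc m}. 1 / (real e)^2) = (\<Sum>e\<in>{2..m}. 1 / (real e)^2) + 1 / (real (Suc m))^2"
    using step.hyps by (simp add: sum.cl_ivl_Suc)
  also have "\<dots> \<le> 3/4 - 1 / real m + 1 / (real (Suc m))^2" using step.IH by simp
  also have "\<dots> \<le> 3/4 - 1 / real (Suc m)"
  proof -
    have m0: "real m > 0" using step.hyps by simp
    have "1 / (real (Suc m))^2 \<le> 1 / (real m * real (Suc m))"
      using m0 by (intro divide_left_mono) (auto simp: power2_eq_square intro!: mult_right_mono)
    also have "1 / (real m * real (Suc m)) = 1 / real m - 1 / real (Suc m)"
      using m0 by (simp add: field_simps)
    finally have "1 / (real (Suc m))^2 \<le> 1 / real m - 1 / real (Suc m)" .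
    then show ?thesis by simp
  qed
  finally show ?case .
qed

lemma divsum_sq: assumes m: "m \<ge> 2"
  shows "(\<Sum>d\<in>{d\<in>{2..<m}. d dvd m}. (real d)^2) \<le> (real m)^2 * (3/4 - 1 / real m)"
proof -
  let ?P = "{d\<in>{2..<m}. d dvd m}"
  let ?h = "\<lambda>d. m div d"
  have inj: "inj_on ?h ?P"
  proof (rule inj_onI)
    fix a b assume a: "a \<in> ?P" and b: "b \<in> ?P" and e: "m div a = m div b"
    have "a = m div (m div a)" using a m by (auto elim!: dvdE)
    also have "\<dots> = m div (m div b)" using e by simp
    also have "\<dots> = b" using b m by (auto elim!: dvdE)
    finally show "a = b" .
  qed
  have eq: "real d = real m / real (m div d)" if "d \<in> ?P" for d
  proof -
    from that obtain c where c: "m = d * c" by auto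
    have "c > 0" using c m by (cases c) auto
    have "d > 0" using that by auto
    then have "m div d = c" using c by simp
    then show ?thesis using c \<open>c > 0\<close> by (simp add: field_simps)
  qed
  have sub: "?h ` ?P \<subseteq> {2..m}"
  proof
    fix e assume "e \<in> ?h ` ?P"
    then obtain d where d: "d \<in> ?P" "e = m div d" by auto
    then obtain c where c: "m = d * c" by auto
    have "d > 0" using d by auto
    then have ec: "e = c" using c d by simp
    have "c \<ge> 2" using c d(1) m by (cases c; cases "c - 1") auto
    moreover have "c \<le> m" using c \<open>d > 0\<close> by simp
    ultimately show "e \<in> {2..m}" using ec by simp
  qed
  have "(\<Sum>d\<in>?P. (real d)^2) = (\<Sum>d\<in>?P. (real m / real (?h d))^2)"
    using eq by (intro sum.cong) auto
  also have "\<dots> = (\<Sum>e\<in>?h ` ?P. (real m / real e)^2)"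
    using sum.reindex[OF inj, of "\<lambda>e. (real m / real e)^2"] by simp
  also have "\<dots> \<le> (\<Sum>e\<in>{2..m}. (real m / real e)^2)"
    using sub by (intro sum_mono2) auto
  also have "\<dots> = (real m)^2 * (\<Sum>e\<in>{2..m}. 1 / (real e)^2)"
    by (simp add: sum_distrib_left power_divide)
  also have "\<dots> \<le> (real m)^2 * (3/4 - 1 / real m)"
    using inv_sq_sum[OF m] by (intro mult_left_mono) auto
  finally show ?thesis .
qed

lemma V_rec: assumes m: "m \<ge> 2"
  shows "(\<Sum>d\<in>{d\<in>{1..<m}. d dvd m}. V d) \<le> (1 - 1 / real (fib (2*m))) * V m"
proof (cases "m \<ge> 7")
  case False
  then have "m = 2 \<or> m = 3 \<or> m = 4 \<or> m = 5 \<or> m = 6" using m by auto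
  then show ?thesis
  proof (elim disjE)
    assume "m = 2"
    moreover have "{d\<in>{1..<2::nat}. d dvd 2} = {1}" by auto
    ultimately show ?thesis by (simp add: V_def fib_vals)
  next
    assume "m = 3"
    moreover have "{d\<in>{1..<3::nat}. d dvd 3} = {1}" 
    proof -
      have "{1..<3::nat} = {1,2}" by auto
      then show ?thesis by auto
    qed
    ultimately show ?thesis by (simp add: V_def fib_vals)
  next
    assume "m = 4"
    moreover have "{d\<in>{1..<4::nat}. d dvd 4} = {1,2}" 
    proof -
      have "{1..<4::nat} = {1,2,3}" by auto
      then show ?thesis by auto
    qed
    ultimately show ?thesis by (simp add: V_def fib_vals)
  next
    assume "m = 5"
    moreover have "{d\<in>{1..<5::nat}. d dvd 5} = {1}" 
    proof -
      have "{1..<5::nat} = {1,2,3,4}" by auto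
      then show ?thesis by auto
    qed
    ultimately show ?thesis by (simp add: V_def fib_vals)
  next
    assume "m = 6"
    moreover have "{d\<in>{1..<6::nat}. d dvd 6} = {1,2,3}" 
    proof -
      have "{1..<6::nat} = {1,2,3,4,5}" by auto
      then show ?thesis by auto
    qed
    ultimately show ?thesis by (simp add: V_def fib_vals)
  qed
next
  case True
  let ?P = "{d\<in>{2..<m}. d dvd m}"
  have split: "{d\<in>{1..<m}. d dvd m} = insert 1 ?P" using m by auto
  have "(\<Sum>d\<in>{d\<in>{1..<m}. d dvd m}. V d) = V 1 + (\<Sum>d\<in>?P. V d)"
    unfolding split by (subst sum.insert) auto
  also have "\<dots> \<le> 1 + (\<Sum>d\<in>?P. (real d)^2 / 2)"
    using V_le_sq by (auto simp: V_def intro!: sum_mono)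
  also have "\<dots> = 1 + (\<Sum>d\<in>?P. (real d)^2) / 2" by (simp add: sum_divide_distrib)
  also have "\<dots> \<le> 1 + (real m)^2 * (3/4 - 1 / real m) / 2"
    using divsum_sq[OF m] by simp
  also have "\<dots> \<le> 7/16 * (real m)^2"
  proof -
    have m7: "real m \<ge> 7" using True by simp
    have e: "1 + (real m)^2 * (3/4 - 1 / real m) / 2 = 1 + 3 * (real m)^2 / 8 - real m / 2"
      using m7 by (simp add: field_simps power2_eq_square)
    have "(real m)^2 \<ge> 7 * real m" using m7 by (simp add: power2_eq_square mult_right_mono)
    then show ?thesis unfolding e using m7 zero_le_power2[of "real m"] by linarith
  qed
  also have "\<dots> \<le> (1 - 1 / real (fib (2*m))) * V m"
  proof -
    have "fib (2*m) \<ge> fib 6" using True by (intro fib_mono) simp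
    then have "real (fib (2*m)) \<ge> 8" by (simp add: fib_vals)
    then have f8: "1 / real (fib (2*m)) \<le> 1/8" by (simp add: field_simps)
    have Vm: "V m = (real m)^2 / 2" using True by (simp add: V_def)
    have "7/8 * ((real m)^2 / 2) \<le> (1 - 1 / real (fib (2*m))) * ((real m)^2 / 2)"
      using f8 by (intro mult_right_mono) auto
    then show ?thesis unfolding Vm by simp
  qed
  finally show ?thesis .
qed

definition aT :: "nat \<Rightarrow> real" where "aT m = (real m)^2 / 2 / real (fib (2*m))"

lemma aT_step: assumes m: "m \<ge> 5" shows "aT (Suc m) \<le> 3/5 * aT m"
proof -
  have f: "5 * fib (2*m) \<le> 2 * fib (2*m + 2)" using m by (intro fib_ge_52) simp
  have F0: "real (fib (2*m)) > 0" using m fib_neq_0_nat[of "2*m"] by simp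
  have "fib (2*m+2) > 0" by (intro fib_neq_0_nat) simp
  then have F1: "real (fib (2*m+2)) > 0" by (simp only: of_nat_0_less_iff)
  have f': "5 * real (fib (2*m)) \<le> 2 * real (fib (2*m + 2))" using f by linarith
  have sq: "2 * (real m + 1)^2 \<le> 3 * (real m)^2"
  proof -
    have "real m \<ge> 5" using m by simp
    then have "(real m)^2 \<ge> 5 * real m" by (simp add: power2_eq_square mult_right_mono)
    moreover have "2 * (real m + 1)^2 = 2 * (real m)^2 + 4 * real m + 2"
      by (simp add: power2_eq_square algebra_simps)
    ultimately show ?thesis using \<open>real m \<ge> 5\<close> by linarith
  qed
  have "aT (Suc m) = (real m + 1)^2 / 2 / real (fib (2*m+2))" by (simp add: aT_def)
  also have "\<dots> \<le> 3/5 * ((real m)^2 / 2 / real (fib (2*m)))"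
  proof -
    have "(real m + 1)^2 * 5 * real (fib (2*m)) \<le> (real m + 1)^2 * (2 * real (fib (2*m+2)))"
      using f' by (simp add: mult.assoc mult_left_mono)
    also have "\<dots> = 2 * (real m + 1)^2 * real (fib (2*m+2))" by simp
    also have "\<dots> \<le> 3 * (real m)^2 * real (fib (2*m+2))"
      using sq F1 by (intro mult_right_mono) auto
    finally have "(real m + 1)^2 * 5 * real (fib (2*m)) \<le> 3 * (real m)^2 * real (fib (2*m+2))" .
    then show ?thesis using F0 F1 by (simp add: field_simps)
  qed
  also have "\<dots> = 3/5 * aT m" by (simp add: aT_def)
  finally show ?thesis .
qed

lemma aT_tail: assumes "N \<ge> 7" shows "(\<Sum>m\<in>{7..N}. aT m) \<le> 5/2 * aT 7 - 3/2 * aT N"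
  using assms
proof (induction N rule: dec_induct)
  case base then show ?case by simp
next
  case (step N)
  have "(\<Sum>m\<in>{7..Suc N}. aT m) = (\<Sum>m\<in>{7..N}. aT m) + aT (Suc N)"
    using step.hyps by (simp add: sum.cl_ivl_Suc)
  also have "\<dots> \<le> 5/2 * aT 7 - 3/2 * aT N + aT (Suc N)" using step.IH by simp
  also have "\<dots> \<le> 5/2 * aT 7 - 3/2 * aT (Suc N)" using aT_step[of N] step.hyps by simp
  finally show ?case .
qed

lemma aT_nonneg: "aT m \<ge> 0" by (simp add: aT_def)

lemma Vsum_lt1: "(\<Sum>m\<in>{2..M}. V m / real (fib (2*m))) < 1"
proof -
  let ?f = "\<lambda>m. V m / real (fib (2*m))"
  have nn: "?f m \<ge> 0" for m using V_nonneg by simp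
  define N where "N = M + 7"
  have "(\<Sum>m\<in>{2..M}. ?f m) \<le> (\<Sum>m\<in>{2..N}. ?f m)"
    using nn by (intro sum_mono2) (auto simp: N_def)
  also have "{2..N} = {2..6} \<union> {7..N}" by (auto simp: N_def)
  also have "(\<Sum>m\<in>{2..6} \<union> {7..N}. ?f m) = (\<Sum>m\<in>{2..6}. ?f m) + (\<Sum>m\<in>{7..N}. ?f m)"
    by (intro sum.union_disjoint) auto
  finally have 1: "(\<Sum>m\<in>{2..M}. ?f m) \<le> (\<Sum>m\<in>{2..6}. ?f m) + (\<Sum>m\<in>{7..N}. ?f m)" .
  have "(\<Sum>m\<in>{7..N}. ?f m) = (\<Sum>m\<in>{7..N}. aT m)"
    by (intro sum.cong) (auto simp: V_def aT_def)
  also have "\<dots> \<le> 5/2 * aT 7" using aT_tail[of N] aT_nonneg[of N] by (simp add: N_def)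
  finally have 2: "(\<Sum>m\<in>{7..N}. ?f m) \<le> 5/2 * aT 7" .
  have 3: "(\<Sum>m\<in>{2..6::nat}. ?f m) = ?f 2 + ?f 3 + ?f 4 + ?f 5 + ?f 6"
  proof -
    have "{2..6::nat} = {2,3,4,5,6}" by auto
    then show ?thesis by simp
  qed
  have 4: "?f 2 + ?f 3 + ?f 4 + ?f 5 + ?f 6 + 5/2 * aT 7 < 1"
    by (simp add: V_def aT_def fib_vals)
  show ?thesis using 1 2 3 4 by linarith
qed



lemma divset_split: "(k::nat) \<ge> 1 \<Longrightarrow> {i\<in>{1..k}. i dvd k} = insert k {i\<in>{1..<k}. i dvd k}"
  by auto

lemma col_eq:
  fixes y :: "nat \<Rightarrow> complex"
  assumes "k \<ge> 1" and "(\<Sum>i\<in>{i\<in>{1..k}. i dvd k}. of_nat (fib i) * y i) = of_nat (fib j) * y k"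
  shows "(of_nat (fib j) - of_nat (fib k)) * y k = (\<Sum>i\<in>{i\<in>{1..<k}. i dvd k}. of_nat (fib i) * y i)"
proof -
  have "(\<Sum>i\<in>{i\<in>{1..k}. i dvd k}. of_nat (fib i) * y i)
      = of_nat (fib k) * y k + (\<Sum>i\<in>{i\<in>{1..<k}. i dvd k}. of_nat (fib i) * y i)"
    unfolding divset_split[OF assms(1)] by (subst sum.insert) auto
  then show ?thesis using assms(2) by (simp add: algebra_simps)
qed

lemma y1_zero:
  fixes y :: "nat \<Rightarrow> complex"
  assumes j2: "2 \<le> j" "j \<le> n"
  and Ck: "\<And>k. 2 \<le> k \<Longrightarrow> k \<le> n \<Longrightarrow>
     (\<Sum>i\<in>{i\<in>{1..k}. i dvd k}. of_nat (fib i) * y i) = of_nat (fib j) * y k"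
  shows "y 1 = 0"
proof (rule ccontr)
  assume y1: "y 1 \<noteq> 0"
  define z where "z k = y k / y 1" for k
  have pos: "Im (z k) = 0 \<and> Re (z k) > 0" if "1 \<le> k" "k < j" for k
    using that
  proof (induction k rule: less_induct)
    case (less k)
    show ?case
    proof (cases "k = 1")
      case True then show ?thesis using y1 by (simp add: z_def)
    next
      case False
      then have k2: "k \<ge> 2" using less.prems by simp
      have ce: "(of_nat (fib j) - of_nat (fib k)) * y k = (\<Sum>i\<in>{i\<in>{1..<k}. i dvd k}. of_nat (fib i) * y i)"
        using col_eq[of k y j] Ck[of k] k2 less.prems j2 by simp
      have fl: "fib k < fib j" using fib_strict[OF k2 less.prems(2)] .
      define D where "D = real (fib j) - real (fib k)"
      have D: "D > 0" using fl by (simp add: D_def)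
      have "of_real D * z k = (\<Sum>i\<in>{i\<in>{1..<k}. i dvd k}. of_nat (fib i) * z i)"
        using ce y1 unfolding z_def D_def
        by (simp add: sum_divide_distrib[symmetric] field_simps of_nat_diff)
      then have zk: "z k = (\<Sum>i\<in>{i\<in>{1..<k}. i dvd k}. of_nat (fib i) * z i) / of_real D"
        using D by (simp add: field_simps)
      have IH: "Im (z i) = 0 \<and> Re (z i) > 0" if "i \<in> {i\<in>{1..<k}. i dvd k}" for i
        using that less.IH[of i] less.prems by auto
      have "Im (\<Sum>i\<in>{i\<in>{1..<k}. i dvd k}. of_nat (fib i) * z i) = 0"
        using IH by simp
      moreover have "Re (\<Sum>i\<in>{i\<in>{1..<k}. i dvd k}. of_nat (fib i) * z i) > 0"
      proof -
        have "(\<Sum>i\<in>{i\<in>{1..<k}. i dvd k}. real (fib i) * Re (z i)) > 0"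
        proof (rule sum_pos)
          show "finite {i\<in>{1..<k}. i dvd k}" by simp
          have "1 \<in> {i\<in>{1..<k}. i dvd k}" using k2 by auto
          then show "{i\<in>{1..<k}. i dvd k} \<noteq> {}" by blast
          fix i assume "i \<in> {i\<in>{1..<k}. i dvd k}"
          then show "real (fib i) * Re (z i) > 0" using IH[of i] fib_neq_0_nat[of i] by auto
        qed
        then show ?thesis by simp
      qed
      ultimately show ?thesis using zk D by (simp add: Re_divide Im_divide)
    qed
  qed
  have j1: "j \<ge> 1" using j2 by simp
  have "(of_nat (fib j) - of_nat (fib j)) * y j = (\<Sum>i\<in>{i\<in>{1..<j}. i dvd j}. of_nat (fib i) * y i)"
    using col_eq[of j y j] Ck[of j] j2 by simp
  then have "(\<Sum>i\<in>{i\<in>{1..<j}. i dvd j}. of_nat (fib i) * y i) / y 1 = 0" by simp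
  then have s0: "(\<Sum>i\<in>{i\<in>{1..<j}. i dvd j}. of_nat (fib i) * z i) = 0"
    unfolding z_def by (simp add: sum_divide_distrib[symmetric] mult.commute times_divide_eq_right)
  have P: "(\<Sum>i\<in>{i\<in>{1..<j}. i dvd j}. real (fib i) * Re (z i)) > 0"
  proof (rule sum_pos)
    show "finite {i\<in>{1..<j}. i dvd j}" by simp
    have "1 \<in> {i\<in>{1..<j}. i dvd j}" using j2 by auto
    then show "{i\<in>{1..<j}. i dvd j} \<noteq> {}" by blast
    fix i assume "i \<in> {i\<in>{1..<j}. i dvd j}"
    then show "real (fib i) * Re (z i) > 0" using pos[of i] fib_neq_0_nat[of i] by auto
  qed
  have R: "Re (\<Sum>i\<in>{i\<in>{1..<j}. i dvd j}. of_nat (fib i) * z i) = (\<Sum>i\<in>{i\<in>{1..<j}. i dvd j}. real (fib i) * Re (z i))"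
    by simp
  have "Re (\<Sum>i\<in>{i\<in>{1..<j}. i dvd j}. of_nat (fib i) * z i) > 0" using P R by linarith
  then show False unfolding s0 by simp
qed

definition W :: "nat \<Rightarrow> nat \<Rightarrow> real" where
  "W j k = (if j dvd k then V (k div j) * real (fib j) / real (fib k) else 0)"

lemma W_nonneg: "W j k \<ge> 0" by (simp add: W_def V_nonneg)

lemma Q_eq:
  assumes j: "j \<ge> 1" and km: "k = m * j" and m: "m \<ge> 1"
  shows "(\<Sum>i\<in>{i\<in>{1..<k}. i dvd k}. if j dvd i then V (i div j) else 0)
       = (\<Sum>d\<in>{d\<in>{1..<m}. d dvd m}. V d)"
proof -
  have "(\<Sum>i\<in>{i\<in>{1..<k}. i dvd k}. if j dvd i then V (i div j) else 0)
      = (\<Sum>i\<in>{i\<in>{i\<in>{1..<k}. i dvd k}. j dvd i}. V (i div j))"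
    by (rule sum.inter_filter[symmetric]) simp
  also have "{i\<in>{i\<in>{1..<k}. i dvd k}. j dvd i} = (\<lambda>d. d * j) ` {d\<in>{1..<m}. d dvd m}"
  proof (rule Set.set_eqI, rule iffI)
    fix i assume "i \<in> {i\<in>{i\<in>{1..<k}. i dvd k}. j dvd i}"
    then have i: "1 \<le> i" "i < k" "i dvd k" "j dvd i" by auto
    from i(4) obtain d where d: "i = d * j" by (metis dvd_def mult.commute)
    have "d \<ge> 1" using i(1) d by (cases d) auto
    moreover have "d < m" using i(2) d km j by simp
    moreover have "d dvd m" using i(3) d km j by (simp add: dvd_mult_cancel_right)
    ultimately show "i \<in> (\<lambda>d. d * j) ` {d\<in>{1..<m}. d dvd m}" using d by auto
  next
    fix i assume "i \<in> (\<lambda>d. d * j) ` {d\<in>{1..<m}. d dvd m}"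
    then obtain d where d: "i = d * j" "1 \<le> d" "d < m" "d dvd m" by auto
    have "1 \<le> i" using d j by simp
    moreover have "i < k" using d km j by simp
    moreover have "i dvd k" using d km by (simp add: mult_dvd_mono)
    ultimately show "i \<in> {i\<in>{i\<in>{1..<k}. i dvd k}. j dvd i}" using d by auto
  qed
  also have "(\<Sum>i\<in>(\<lambda>d. d * j) ` {d\<in>{1..<m}. d dvd m}. V (i div j)) = (\<Sum>d\<in>{d\<in>{1..<m}. d dvd m}. V (d * j div j))"
    by (subst sum.reindex) (use j in \<open>auto simp: inj_on_def\<close>)
  also have "\<dots> = (\<Sum>d\<in>{d\<in>{1..<m}. d dvd m}. V d)" using j by simp
  finally show ?thesis .
qed

lemma Q_zero:
  assumes "\<not> j dvd k"
  shows "(\<Sum>i\<in>{i\<in>{1..<k}. i dvd k}. if j dvd i then V (i div j) else (0::real)) = 0"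
  using assms by (intro sum.neutral) (auto dest: dvd_trans)

lemma core:
  fixes y :: "nat \<Rightarrow> complex"
  assumes j2: "2 \<le> j" "j \<le> n"
  and C1: "(\<Sum>i\<in>{1..n}. y i) = of_nat (fib j) * y 1"
  and Ck: "\<And>k. 2 \<le> k \<Longrightarrow> k \<le> n \<Longrightarrow>
     (\<Sum>i\<in>{i\<in>{1..k}. i dvd k}. of_nat (fib i) * y i) = of_nat (fib j) * y k"
  shows "\<forall>i\<in>{1..n}. y i = 0"
proof -
  have y1: "y 1 = 0" by (rule y1_zero[OF j2 Ck])
  have small: "y k = 0" if "1 \<le> k" "k < j" for k
    using that
  proof (induction k rule: less_induct)
    case (less k)
    show ?case
    proof (cases "k = 1")
      case True then show ?thesis using y1 by simp
    next
      case False
      then have k2: "k \<ge> 2" using less.prems by simp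
      have ce: "(of_nat (fib j) - of_nat (fib k)) * y k = (\<Sum>i\<in>{i\<in>{1..<k}. i dvd k}. of_nat (fib i) * y i)"
        using col_eq[of k y j] Ck[of k] k2 less.prems j2 by simp
      have "(\<Sum>i\<in>{i\<in>{1..<k}. i dvd k}. of_nat (fib i) * y i) = 0"
        using less.IH less.prems by (intro sum.neutral) auto
      moreover have "fib k < fib j" using fib_strict[OF k2 less.prems(2)] .
      ultimately show ?thesis using ce by simp
    qed
  qed
  have bound: "cmod (y k) \<le> cmod (y j) * W j k" if "1 \<le> k" "k \<le> n" for k
    using that
  proof (induction k rule: less_induct)
    case (less k)
    consider "k < j" | "k = j" | "k > j" by linarith
    then show ?case
    proof cases
      case 1 then show ?thesis using small less.prems W_nonneg[of j k] by simp
    next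
      case 2 then show ?thesis using j2 fib_neq_0_nat[of j] by (simp add: W_def V_def)
    next
      case 3
      have k2: "k \<ge> 2" using 3 j2 by simp
      have ce: "(of_nat (fib j) - of_nat (fib k)) * y k = (\<Sum>i\<in>{i\<in>{1..<k}. i dvd k}. of_nat (fib i) * y i)"
        using col_eq[of k y j] Ck[of k] k2 less.prems j2 by simp
      have fl: "fib j < fib k" using fib_strict[OF j2(1) 3] .
      have Fk0: "real (fib k) > 0" using fib_neq_0_nat[of k] k2 by simp
      have Fj0: "real (fib j) > 0" using fib_neq_0_nat[of j] j2 by simp
      define Q where "Q = (\<Sum>i\<in>{i\<in>{1..<k}. i dvd k}. if j dvd i then V (i div j) else (0::real))"
      have "(real (fib k) - real (fib j)) * cmod (y k) = cmod ((of_nat (fib j) - of_nat (fib k)) * y k)"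
      proof -
        have e: "(of_nat (fib j) - of_nat (fib k) :: complex) = - of_real (real (fib k) - real (fib j))" by simp
        have "real (fib k) - real (fib j) > 0" using fl by simp
        then show ?thesis unfolding e norm_mult norm_minus_cancel norm_of_real by simp
      qed
      also have "\<dots> = cmod (\<Sum>i\<in>{i\<in>{1..<k}. i dvd k}. of_nat (fib i) * y i)" using ce by simp
      also have "\<dots> \<le> (\<Sum>i\<in>{i\<in>{1..<k}. i dvd k}. real (fib i) * cmod (y i))"
        by (rule order_trans[OF norm_sum]) (simp add: norm_mult)
      also have "\<dots> \<le> (\<Sum>i\<in>{i\<in>{1..<k}. i dvd k}. real (fib i) * (cmod (y j) * W j i))"
        using less.IH less.prems by (intro sum_mono mult_left_mono) auto
      also have "\<dots> = (\<Sum>i\<in>{i\<in>{1..<k}. i dvd k}. cmod (y j) * real (fib j) * (if j dvd i then V (i div j) else 0))"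
      proof (intro sum.cong refl)
        fix i assume "i \<in> {i\<in>{1..<k}. i dvd k}"
        then have "real (fib i) > 0" using fib_neq_0_nat[of i] by auto
        then show "real (fib i) * (cmod (y j) * W j i) = cmod (y j) * real (fib j) * (if j dvd i then V (i div j) else 0)"
          by (simp add: W_def)
      qed
      also have "\<dots> = cmod (y j) * real (fib j) * Q" unfolding Q_def by (simp add: sum_distrib_left)
      finally have main: "(real (fib k) - real (fib j)) * cmod (y k) \<le> cmod (y j) * real (fib j) * Q" .
      show ?thesis
      proof (cases "j dvd k")
        case False
        then have "Q = 0" unfolding Q_def by (rule Q_zero)
        then have "(real (fib k) - real (fib j)) * cmod (y k) \<le> 0" using main by simp
        moreover have "real (fib k) - real (fib j) > 0" using fl by simp
        ultimately have "cmod (y k) \<le> 0" by (simp add: mult_le_0_iff)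
        then show ?thesis using W_nonneg[of j k] by (simp add: mult_nonneg_nonneg)
      next
        case True
        then obtain m where km: "k = m * j" by (metis dvd_def mult.commute)
        have m2: "m \<ge> 2" using km 3 by (cases m; cases "m - 1") auto
        have "Q = (\<Sum>d\<in>{d\<in>{1..<m}. d dvd m}. V d)" unfolding Q_def
          by (rule Q_eq) (use j2 km m2 in auto)
        also have "\<dots> \<le> (1 - 1 / real (fib (2*m))) * V m" by (rule V_rec[OF m2])
        also have "\<dots> \<le> (1 - real (fib j) / real (fib k)) * V m"
        proof (rule mult_right_mono[OF _ V_nonneg])
          have "fib j * fib (2*m) \<le> fib k" using fib_mult_ge[OF j2(1)] m2 km by simp
          then have "real (fib j) * real (fib (2*m)) \<le> real (fib k)" by (simp only: of_nat_mult[symmetric] of_nat_le_iff)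
          moreover have "real (fib (2*m)) > 0" using fib_neq_0_nat[of "2*m"] m2 by simp
          ultimately have "real (fib j) / real (fib k) \<le> 1 / real (fib (2*m))"
            using Fk0 by (simp add: field_simps)
          then show "1 - 1 / real (fib (2*m)) \<le> 1 - real (fib j) / real (fib k)" by simp
        qed
        finally have "Q \<le> (1 - real (fib j) / real (fib k)) * V m" .
        then have "(real (fib k) - real (fib j)) * cmod (y k) \<le> cmod (y j) * real (fib j) * ((1 - real (fib j) / real (fib k)) * V m)"
          using main Fj0 by (meson mult_left_mono norm_ge_zero order_trans zero_le_mult_iff less_imp_le)
        also have "\<dots> = (real (fib k) - real (fib j)) * (cmod (y j) * W j k)"
          using True km Fk0 j2 by (simp add: W_def field_simps)
        finally have "(real (fib k) - real (fib j)) * cmod (y k) \<le> (real (fib k) - real (fib j)) * (cmod (y j) * W j k)" .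
        moreover have "real (fib k) - real (fib j) > 0" using fl by simp
        ultimately show ?thesis by simp
      qed
    qed
  qed
  have sW: "(\<Sum>k\<in>{j<..n}. W j k) < 1"
  proof -
    define W' where "W' k = V (k div j) * real (fib j) / real (fib k)" for k
    have "(\<Sum>k\<in>{j<..n}. W j k) = (\<Sum>k\<in>{k\<in>{j<..n}. j dvd k}. W' k)"
      unfolding W_def W'_def by (rule sum.inter_filter[symmetric]) simp
    also have "\<dots> \<le> (\<Sum>k\<in>(\<lambda>m. m * j) ` {2..n}. W' k)"
    proof (rule sum_mono2)
      show "finite ((\<lambda>m. m * j) ` {2..n})" by simp
      show "{k\<in>{j<..n}. j dvd k} \<subseteq> (\<lambda>m. m * j) ` {2..n}"
      proof
        fix k assume k: "k \<in> {k\<in>{j<..n}. j dvd k}"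
        then have "j dvd k" by simp
        then obtain m where km: "k = m * j" by (metis dvd_def mult.commute)
        have "m \<ge> 2" using km k by (cases m; cases "m - 1") auto
        moreover have "m \<le> n"
        proof -
          have mm: "m \<le> m * j" using j2 by simp
          have "k \<le> n" using k by simp
          then show ?thesis using mm km by linarith
        qed
        ultimately show "k \<in> (\<lambda>m. m * j) ` {2..n}" using km by auto
      qed
      show "0 \<le> W' x" for x by (simp add: W'_def V_nonneg)
    qed
    also have "\<dots> = (\<Sum>m\<in>{2..n}. W' (m * j))"
      by (rule sum.reindex_cong[where l="\<lambda>m. m * j"]) (use j2 in \<open>auto simp: inj_on_def\<close>)
    also have "\<dots> \<le> (\<Sum>m\<in>{2..n}. V m / real (fib (2*m)))"
    proof (rule sum_mono)
      fix m assume m: "m \<in> {2..n}"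
      have "fib j * fib (2*m) \<le> fib (m*j)" using fib_mult_ge[OF j2(1)] m by simp
      then have a: "real (fib j) * real (fib (2*m)) \<le> real (fib (m*j))" by (simp only: of_nat_mult[symmetric] of_nat_le_iff)
      have b: "real (fib (2*m)) > 0" using fib_neq_0_nat[of "2*m"] m by simp
      have c: "real (fib (m*j)) > 0" using fib_neq_0_nat[of "m*j"] m j2 by simp
      have "real (fib j) / real (fib (m*j)) \<le> 1 / real (fib (2*m))" using a b c by (simp add: field_simps)
      then have "V m * (real (fib j) / real (fib (m*j))) \<le> V m * (1 / real (fib (2*m)))"
        by (intro mult_left_mono V_nonneg)
      then show "W' (m * j) \<le> V m / real (fib (2*m))" using j2 by (simp add: W'_def)
    qed
    also have "\<dots> < 1" by (rule Vsum_lt1)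
    finally show ?thesis .
  qed
  have split: "{1..n} = {1..<j} \<union> {j} \<union> {j<..n}" using j2 by auto
  have "(\<Sum>i\<in>{1..n}. y i) = (\<Sum>i\<in>{1..<j}. y i) + y j + (\<Sum>i\<in>{j<..n}. y i)"
    unfolding split by (subst sum.union_disjoint, auto)+
  moreover have "(\<Sum>i\<in>{1..<j}. y i) = 0" using small by (intro sum.neutral) auto
  ultimately have "y j = - (\<Sum>i\<in>{j<..n}. y i)" using C1 y1 by (simp add: add_eq_0_iff)
  then have "cmod (y j) \<le> (\<Sum>i\<in>{j<..n}. cmod (y i))" using norm_sum by (metis norm_minus_cancel)
  also have "\<dots> \<le> (\<Sum>i\<in>{j<..n}. cmod (y j) * W j i)"
    using bound j2 by (intro sum_mono) auto
  also have "\<dots> = cmod (y j) * (\<Sum>i\<in>{j<..n}. W j i)" by (simp add: sum_distrib_left)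
  finally have "cmod (y j) * (1 - (\<Sum>i\<in>{j<..n}. W j i)) \<le> 0" by (simp add: algebra_simps)
  then have yj: "cmod (y j) = 0" using sW by (simp add: mult_le_0_iff)
  show ?thesis
  proof
    fix i assume "i \<in> {1..n}"
    then have "cmod (y i) \<le> 0" using bound[of i] yj by simp
    then show "y i = 0" by simp
  qed
qed


lemma sum_shift1: "(\<Sum>i<(n::nat). f i) = (\<Sum>i\<in>{1..n}. f (i - 1))"
  by (induction n) (auto simp: sum.cl_ivl_Suc)

theorem theorem4:
  fixes n j :: nat
  assumes "n \<ge> 2" and "1 \<le> j" and "j \<le> n"
  shows "\<not> eigenvalue (fib_redheffer n) (of_nat (fib j))"
proof
  assume ev: "eigenvalue (fib_redheffer n) (of_nat (fib j))"
  define A where "A = fib_redheffer n"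
  define lam :: complex where "lam = of_nat (fib j)"
  have A: "A \<in> carrier_mat n n" by (simp add: A_def fib_redheffer_def)
  have At: "transpose_mat A \<in> carrier_mat n n" using A by simp
  define j' where "j' = (if j = 1 then 2 else j)"
  have fj: "fib j' = fib j" using assms by (simp add: j'_def)
  have j'2: "2 \<le> j'" "j' \<le> n" using assms by (auto simp: j'_def)
  have "eigenvalue (transpose_mat A) lam"
    using ev eigenvalue_root_char_poly[OF A] eigenvalue_root_char_poly[OF At] char_poly_transpose_mat[OF A]
    unfolding A_def lam_def by simp
  then obtain v where v: "v \<in> carrier_vec n" "v \<noteq> 0\<^sub>v n" "transpose_mat A *\<^sub>v v = lam \<cdot>\<^sub>v v"
    unfolding eigenvalue_def eigenvector_def using At by auto
  have comp: "(\<Sum>i<n. A $$ (i, c) * v $ i) = lam * v $ c" if c: "c < n" for c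
  proof -
    have "(transpose_mat A *\<^sub>v v) $ c = (lam \<cdot>\<^sub>v v) $ c" using v(3) by simp
    moreover have "(transpose_mat A *\<^sub>v v) $ c = row (transpose_mat A) c \<bullet> v" using A c by simp
    moreover have "row (transpose_mat A) c \<bullet> v = (\<Sum>i\<in>{0..<n}. row (transpose_mat A) c $ i * v $ i)"
      using v by (simp add: scalar_prod_def)
    moreover have "(\<Sum>i\<in>{0..<n}. row (transpose_mat A) c $ i * v $ i) = (\<Sum>i<n. A $$ (i, c) * v $ i)"
      using A c by (intro sum.cong) auto
    moreover have "(lam \<cdot>\<^sub>v v) $ c = lam * v $ c" using v c by simp
    ultimately show ?thesis by simp
  qed
  have Aent: "A $$ (i, c) = (if c + 1 = 1 then 1 else if (i + 1) dvd (c + 1) then of_nat (fib (i + 1)) else 0)"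
    if "i < n" "c < n" for i c
    using that by (simp add: A_def fib_redheffer_def)
  define y where "y i = v $ (i - 1)" for i
  have C1: "(\<Sum>i\<in>{1..n}. y i) = of_nat (fib j') * y 1"
  proof -
    have "(\<Sum>i<n. A $$ (i, 0) * v $ i) = lam * v $ 0" using comp assms by simp
    moreover have "(\<Sum>i<n. A $$ (i, 0) * v $ i) = (\<Sum>i<n. v $ i)"
      using Aent assms by (intro sum.cong) auto
    ultimately have "(\<Sum>i<n. v $ i) = lam * v $ 0" by simp
    then show ?thesis unfolding sum_shift1 y_def lam_def fj by simp
  qed
  have Ck: "(\<Sum>i\<in>{i\<in>{1..k}. i dvd k}. of_nat (fib i) * y i) = of_nat (fib j') * y k"
    if k: "2 \<le> k" "k \<le> n" for k
  proof -
    have "(\<Sum>i<n. A $$ (i, k - 1) * v $ i) = lam * v $ (k - 1)" using comp k by simp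
    moreover have "(\<Sum>i<n. A $$ (i, k - 1) * v $ i) = (\<Sum>i<n. (if (i + 1) dvd k then of_nat (fib (i + 1)) else 0) * v $ i)"
      using Aent k by (intro sum.cong) auto
    ultimately have "(\<Sum>i<n. (if (i + 1) dvd k then of_nat (fib (i + 1)) else 0) * v $ i) = lam * v $ (k - 1)" by simp
    then have "(\<Sum>i\<in>{1..n}. (if (i - 1 + 1) dvd k then of_nat (fib (i - 1 + 1)) else 0) * y i) = lam * y k"
      unfolding sum_shift1 y_def using k by simp
    moreover have "(\<Sum>i\<in>{1..n}. (if (i - 1 + 1) dvd k then of_nat (fib (i - 1 + 1)) else 0) * y i)
       = (\<Sum>i\<in>{1..n}. (if i dvd k then of_nat (fib i) else 0) * y i)"
      by (intro sum.cong) auto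
    ultimately have "(\<Sum>i\<in>{1..n}. (if i dvd k then of_nat (fib i) else 0) * y i) = lam * y k"
      by simp
    moreover have "(\<Sum>i\<in>{1..n}. (if i dvd k then of_nat (fib i) else 0) * y i)
        = (\<Sum>i\<in>{i\<in>{1..n}. i dvd k}. of_nat (fib i) * y i)"
      by (subst sum.inter_filter) (auto intro!: sum.cong)
    moreover have "{i\<in>{1..n}. i dvd k} = {i\<in>{1..k}. i dvd k}"
      using k by (auto dest: dvd_imp_le)
    ultimately show ?thesis unfolding lam_def fj by simp
  qed
  have all0: "\<forall>i\<in>{1..n}. y i = 0" by (rule core[OF j'2 C1 Ck])
  have "v = 0\<^sub>v n"
  proof (rule eq_vecI)
    fix c assume "c < dim_vec (0\<^sub>v n :: complex vec)"
    then have c: "c < n" by simp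
    have "y (c + 1) = 0" using all0 c by auto
    then show "v $ c = 0\<^sub>v n $ c" using c by (simp add: y_def)
  next
    show "dim_vec v = dim_vec (0\<^sub>v n :: complex vec)" using v(1) by simp
  qed
  then show False using v(2) by simp
qed

end
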